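(* For every non-negative integer $k$ and every proper $3$-coloring $\varphi$ of $G_k$, we have $\varphi(v_k)=\varphi(v_0)$ and $\varphi(u_k)=\varphi(u_0)$.
   Context: The outerplanar graphs $G_k$ are defined inductively. $G_0$ has vertex set $\{v_0,u_0\}$ and the single edge $\{v_0,u_0\}$. For $i\ge 1$, $G_i$ is obtained from $G_{i-1}$ by adding six new vertices $a_i,b_i,c_i,d_i,v_i,u_i$ and the edges $\{a_i,b_i\},\{c_i,d_i\},\{a_i,v_i\},\{b_i,v_i\},\{c_i,u_i\},\{d_i,u_i\},\{a_i,v_{i-1}\},\{b_i,v_{i-1}\},\{c_i,u_{i-1}\},\{d_i,u_{i-1}\}$. A proper $3$-coloring is a map $V(G_k)\to\{1,2,3\}$ giving adjacent vertices different colors. *)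

theory Defs
  imports Main
begin

datatype vtx = A nat | B nat | C nat | D nat | V nat | U nat

fun Gverts :: "nat \<Rightarrow> vtx set" where
  "Gverts 0 = {V 0, U 0}"
| "Gverts (Suc i) = Gverts i \<union> {A (Suc i), B (Suc i), C (Suc i), D (Suc i), V (Suc i), U (Suc i)}"

fun Gedges :: "nat \<Rightarrow> vtx set set" where
  "Gedges 0 = {{V 0, U 0}}"
| "Gedges (Suc i) = Gedges i \<union>
     {{A (Suc i), B (Suc i)}, {C (Suc i), D (Suc i)},
      {A (Suc i), V (Suc i)}, {B (Suc i), V (Suc i)},
      {C (Suc i), U (Suc i)}, {D (Suc i), U (Suc i)},
      {A (Suc i), V i}, {B (Suc i), V i},
      {C (Suc i), U i}, {D (Suc i), U i}}"

definition proper_3col :: "nat \<Rightarrow> (vtx \<Rightarrow> nat) \<Rightarrow> bool" where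
  "proper_3col k \<phi> \<longleftrightarrow>
     (\<forall>x\<in>Gverts k. \<phi> x \<in> {1,2,3}) \<and>
     (\<forall>x y. {x, y} \<in> Gedges k \<longrightarrow> \<phi> x \<noteq> \<phi> y)"

end

theory Submission
  imports Defs
begin

lemma mono_col: "proper_3col (Suc i) \<phi> \<Longrightarrow> proper_3col i \<phi>"
  unfolding proper_3col_def by auto

lemma tri:
  assumes "a \<in> {1,2,3::nat}" "b \<in> {1,2,3}" "x \<in> {1,2,3}" "y \<in> {1,2,3}"
    "a \<noteq> b" "a \<noteq> x" "b \<noteq> x" "a \<noteq> y" "b \<noteq> y"
  shows "x = y"
  using assms by auto

lemma step:
  assumes "proper_3col (Suc i) \<phi>"
  shows "\<phi> (V (Suc i)) = \<phi> (V i) \<and> \<phi> (U (Suc i)) = \<phi> (U i)"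
proof -
  have vi: "V i \<in> Gverts i" "U i \<in> Gverts i" by (cases i; simp)+
  have c: "\<And>x. x \<in> Gverts (Suc i) \<Longrightarrow> \<phi> x \<in> {1,2,3}"
    and e: "\<And>x y. {x, y} \<in> Gedges (Suc i) \<Longrightarrow> \<phi> x \<noteq> \<phi> y"
    using assms unfolding proper_3col_def by blast+
  have "\<phi> (V (Suc i)) = \<phi> (V i)"
    by (rule tri[of "\<phi> (A (Suc i))" "\<phi> (B (Suc i))"]) (rule c e; use vi in \<open>auto simp: insert_commute\<close>)+
  moreover have "\<phi> (U (Suc i)) = \<phi> (U i)"
    by (rule tri[of "\<phi> (C (Suc i))" "\<phi> (D (Suc i))"]) (rule c e; use vi in \<open>auto simp: insert_commute\<close>)+
  ultimately show ?thesis by simp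
qed

theorem lemma6p8:
  fixes k :: nat and \<phi> :: "vtx \<Rightarrow> nat"
  assumes "proper_3col k \<phi>"
  shows "\<phi> (V k) = \<phi> (V 0) \<and> \<phi> (U k) = \<phi> (U 0)"
  using assms
proof (induction k)
  case 0 then show ?case by simp
next
  case (Suc k)
  then show ?case using step[OF Suc.prems] mono_col[OF Suc.prems] by simp
qed

end
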